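(* Let $\mathcal{H}$ be a separable, infinite dimensional, complex Hilbert space, let $\mathscr{U}$ be a free ultrafilter on $\mathbb{N}$, let $(T_{n})_{n\geq1}$ be a sequence in $\mathcal{B}(\mathcal{H})$ and let $B\in\mathcal{B}(\mathcal{H})$. (1) If $T_{n}\to B$ in the strong operator topology, then $B$ is unitarily equivalent to a restriction of $(T_{1},T_{2},\ldots)_{\mathscr{U}}$. (2) If $T_{n}\to B$ in the weak operator topology, then $B$ is unitarily equivalent to a compression of $(T_{1},T_{2},\ldots)_{\mathscr{U}}$. (3) If $T_{n}\to B$ in the $*$-strong operator topology, then $B$ is unitarily equivalent to a reducing part of $(T_{1},T_{2},\ldots)_{\mathscr{U}}$. (In each case $\sup_n\|T_n\|<\infty$, so the ultraproduct is well defined.)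
   Context: Let $\mathcal{H}^{\mathscr{U}}=\ell_\infty(\mathcal{H})/\{(x_n)_{n\ge1}\in\ell_\infty(\mathcal{H}):\lim_{n,\mathscr{U}}\|x_n\|=0\}$, with the image of $(x_n)$ denoted $(x_n)_{\mathscr{U}}$; it is a Hilbert space with inner product $\langle (x_n)_{\mathscr{U}},(y_n)_{\mathscr{U}}\rangle=\lim_{n,\mathscr{U}}\langle x_n,y_n\rangle$. For a norm-bounded sequence $(T_n)$ in $\mathcal{B}(\mathcal{H})$, the ultraproduct $(T_1,T_2,\ldots)_{\mathscr{U}}\in\mathcal{B}(\mathcal{H}^{\mathscr{U}})$ is $(x_n)_{\mathscr{U}}\mapsto(T_nx_n)_{\mathscr{U}}$. For an operator $T$ on a Hilbert space and a closed subspace $\mathcal{M}$: $T|_{\mathcal{M}}$ is a restriction if $\mathcal{M}$ is $T$-invariant; it is a reducing part if $\mathcal{M}$ is invariant under $T$ and $T^{*}$; the compression of $T$ to $\mathcal{M}$ is $PT|_{\mathcal{M}}$ with $P$ the orthogonal projection onto $\mathcal{M}$. $T_\alpha\to T$ in the $*$-strong operator topology means $T_\alpha\to T$ and $T_\alpha^*\to T^*$ strongly. *)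

theory Defs
  imports "HOL-Analysis.Analysis"
begin

text \<open>Completeness is added separately via the
class complete_space.\<close>

class complex_inner = real_normed_vector +
  fixes scaleC :: "complex \<Rightarrow> 'a \<Rightarrow> 'a"
  fixes cinner :: "'a \<Rightarrow> 'a \<Rightarrow> complex"
  assumes scaleC_add_right: "scaleC a (x + y) = scaleC a x + scaleC a y"
    and scaleC_add_left: "scaleC (a + b) x = scaleC a x + scaleC b x"
    and scaleC_scaleC: "scaleC a (scaleC b x) = scaleC (a * b) x"
    and scaleC_one: "scaleC 1 x = x"
    and scaleR_scaleC: "scaleR r x = scaleC (complex_of_real r) x"
    and cinner_add_left: "cinner (x + y) z = cinner x z + cinner y z"
    and cinner_scaleC_left: "cinner (scaleC a x) y = a * cinner x y"
    and cinner_commute: "cinner x y = cnj (cinner y x)"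
    and cinner_self_real: "Im (cinner x x) = 0"
    and norm_eq_sqrt_cinner: "norm x = sqrt (Re (cinner x x))"

definition cspan :: "'a::complex_inner set \<Rightarrow> 'a set" where
  "cspan A = {x. \<exists>F c. finite F \<and> F \<subseteq> A \<and> x = (\<Sum>a\<in>F. scaleC (c a) a)}"

definition infinite_dimensional :: "'a::complex_inner itself \<Rightarrow> bool" where
  "infinite_dimensional _ \<longleftrightarrow> (\<forall>A::'a set. finite A \<longrightarrow> cspan A \<noteq> UNIV)"

definition separable_type :: "'a::topological_space itself \<Rightarrow> bool" where
  "separable_type _ \<longleftrightarrow> (\<exists>D::'a set. countable D \<and> closure D = UNIV)"

definition cblinear :: "('a::complex_inner \<Rightarrow> 'a) \<Rightarrow> bool" where
  "cblinear T \<longleftrightarrow> bounded_linear T \<and> (\<forall>c x. T (scaleC c x) = scaleC c (T x))"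

definition cadjoint :: "('a::complex_inner \<Rightarrow> 'a) \<Rightarrow> ('a \<Rightarrow> 'a)" where
  "cadjoint T = (THE A. \<forall>x y. cinner (T x) y = cinner x (A y))"

definition sot_conv :: "(nat \<Rightarrow> 'a::complex_inner \<Rightarrow> 'a) \<Rightarrow> ('a \<Rightarrow> 'a) \<Rightarrow> bool" where
  "sot_conv T B \<longleftrightarrow> (\<forall>x. (\<lambda>n. T n x) \<longlonglongrightarrow> B x)"

definition wot_conv :: "(nat \<Rightarrow> 'a::complex_inner \<Rightarrow> 'a) \<Rightarrow> ('a \<Rightarrow> 'a) \<Rightarrow> bool" where
  "wot_conv T B \<longleftrightarrow> (\<forall>x y. (\<lambda>n. cinner (T n x) y) \<longlonglongrightarrow> cinner (B x) y)"

definition star_sot_conv :: "(nat \<Rightarrow> 'a::complex_inner \<Rightarrow> 'a) \<Rightarrow> ('a \<Rightarrow> 'a) \<Rightarrow> bool" where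
  "star_sot_conv T B \<longleftrightarrow> sot_conv T B \<and> sot_conv (\<lambda>n. cadjoint (T n)) (cadjoint B)"

definition free_ultrafilter :: "nat filter \<Rightarrow> bool" where
  "free_ultrafilter U \<longleftrightarrow> U \<noteq> bot
     \<and> (\<forall>P. eventually P U \<or> eventually (\<lambda>n. \<not> P n) U)
     \<and> (\<forall>m. eventually (\<lambda>n. n \<noteq> m) U)"

text \<open>Elements of H^U are represented by their representatives, i.e. by
norm-bounded sequences in H (elements of l_inf(H)); two representatives
denote the same element of H^U iff they are related by ueq.  Subspaces of
H^U are represented by saturated sets of representatives.\<close>

definition lbounded :: "(nat \<Rightarrow> 'a::real_normed_vector) \<Rightarrow> bool" where
  "lbounded x \<longleftrightarrow> bounded (range x)"

definition ueq :: "nat filter \<Rightarrow> (nat \<Rightarrow> 'a::real_normed_vector) \<Rightarrow> (nat \<Rightarrow> 'a) \<Rightarrow> bool" where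
  "ueq U x y \<longleftrightarrow> ((\<lambda>n. norm (x n - y n)) \<longlongrightarrow> 0) U"

definition unorm :: "nat filter \<Rightarrow> (nat \<Rightarrow> 'a::real_normed_vector) \<Rightarrow> real" where
  "unorm U x = Lim U (\<lambda>n. norm (x n))"

definition uinner :: "nat filter \<Rightarrow> (nat \<Rightarrow> 'a::complex_inner) \<Rightarrow> (nat \<Rightarrow> 'a) \<Rightarrow> complex" where
  "uinner U x y = Lim U (\<lambda>n. cinner (x n) (y n))"

text \<open>The ultraproduct operator (T_1, T_2, ...)_U acting on representatives.\<close>

definition uop :: "(nat \<Rightarrow> 'a \<Rightarrow> 'a) \<Rightarrow> (nat \<Rightarrow> 'a) \<Rightarrow> (nat \<Rightarrow> 'a)" where
  "uop T x = (\<lambda>n. T n (x n))"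

text \<open>A closed (complex) subspace M of H^U, given by the set S of all
representatives of elements of M.\<close>

definition closed_usubspace :: "nat filter \<Rightarrow> (nat \<Rightarrow> 'a::complex_inner) set \<Rightarrow> bool" where
  "closed_usubspace U S \<longleftrightarrow>
     (\<forall>s\<in>S. lbounded s)
     \<and> (\<lambda>n. 0) \<in> S
     \<and> (\<forall>s\<in>S. \<forall>t\<in>S. (\<lambda>n. s n + t n) \<in> S)
     \<and> (\<forall>s\<in>S. \<forall>c. (\<lambda>n. scaleC c (s n)) \<in> S)
     \<and> (\<forall>s\<in>S. \<forall>t. lbounded t \<and> ueq U s t \<longrightarrow> t \<in> S)
     \<and> (\<forall>x. lbounded x \<and> (\<forall>e>0. \<exists>s\<in>S. unorm U (\<lambda>n. x n - s n) < e) \<longrightarrow> x \<in> S)"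

text \<open>W is (a representative-level description of) a unitary operator from
H onto the subspace M of H^U represented by S.\<close>

definition unitary_onto :: "nat filter \<Rightarrow> (nat \<Rightarrow> 'a::complex_inner) set \<Rightarrow> ('a \<Rightarrow> (nat \<Rightarrow> 'a)) \<Rightarrow> bool" where
  "unitary_onto U S W \<longleftrightarrow>
     (\<forall>x. W x \<in> S)
     \<and> (\<forall>x y. ueq U (W (x + y)) (\<lambda>n. W x n + W y n))
     \<and> (\<forall>c x. ueq U (W (scaleC c x)) (\<lambda>n. scaleC c (W x n)))
     \<and> (\<forall>x y. uinner U (W x) (W y) = cinner x y)
     \<and> (\<forall>s\<in>S. \<exists>x. ueq U (W x) s)"

definition uinvariant :: "nat filter \<Rightarrow> (nat \<Rightarrow> 'a::complex_inner \<Rightarrow> 'a) \<Rightarrow> (nat \<Rightarrow> 'a) set \<Rightarrow> bool" where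
  "uinvariant U T S \<longleftrightarrow> (\<forall>s\<in>S. uop T s \<in> S)"

text \<open>M is invariant under the adjoint of (T_n)_U: for every s in M, the
vector ((T_n)_U)^* s (the vector t with <(T_n)_U v, s> = <v, t> for all v
in H^U) lies in M.\<close>

definition uinvariant_adj :: "nat filter \<Rightarrow> (nat \<Rightarrow> 'a::complex_inner \<Rightarrow> 'a) \<Rightarrow> (nat \<Rightarrow> 'a) set \<Rightarrow> bool" where
  "uinvariant_adj U T S \<longleftrightarrow>
     (\<forall>s\<in>S. \<exists>t\<in>S. \<forall>v. lbounded v \<longrightarrow> uinner U (uop T v) s = uinner U v t)"

text \<open>m represents the orthogonal projection onto M of the vector v of H^U.\<close>

definition uproj :: "nat filter \<Rightarrow> (nat \<Rightarrow> 'a::complex_inner) set \<Rightarrow> (nat \<Rightarrow> 'a) \<Rightarrow> (nat \<Rightarrow> 'a) \<Rightarrow> bool" where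
  "uproj U S v m \<longleftrightarrow> m \<in> S \<and> (\<forall>s\<in>S. uinner U (\<lambda>n. v n - m n) s = 0)"

definition ue_restriction :: "nat filter \<Rightarrow> (nat \<Rightarrow> 'a::complex_inner \<Rightarrow> 'a) \<Rightarrow> ('a \<Rightarrow> 'a) \<Rightarrow> bool" where
  "ue_restriction U T B \<longleftrightarrow> (\<exists>S W. closed_usubspace U S \<and> uinvariant U T S
      \<and> unitary_onto U S W \<and> (\<forall>x. ueq U (uop T (W x)) (W (B x))))"

definition ue_compression :: "nat filter \<Rightarrow> (nat \<Rightarrow> 'a::complex_inner \<Rightarrow> 'a) \<Rightarrow> ('a \<Rightarrow> 'a) \<Rightarrow> bool" where
  "ue_compression U T B \<longleftrightarrow> (\<exists>S W. closed_usubspace U S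
      \<and> unitary_onto U S W \<and> (\<forall>x. uproj U S (uop T (W x)) (W (B x))))"

definition ue_reducing_part :: "nat filter \<Rightarrow> (nat \<Rightarrow> 'a::complex_inner \<Rightarrow> 'a) \<Rightarrow> ('a \<Rightarrow> 'a) \<Rightarrow> bool" where
  "ue_reducing_part U T B \<longleftrightarrow> (\<exists>S W. closed_usubspace U S \<and> uinvariant U T S
      \<and> uinvariant_adj U T S
      \<and> unitary_onto U S W \<and> (\<forall>x. ueq U (uop T (W x)) (W (B x))))"

end

theory Submission
  imports Defs
begin


context complex_inner begin
end

lemma scaleC_zero_right [simp]: "scaleC c (0::'a::complex_inner) = 0"
  by (metis add_cancel_right_right scaleC_add_right)
lemma scaleC_zero_left [simp]: "scaleC 0 (x::'a::complex_inner) = 0"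
  by (metis scaleR_scaleC scaleR_zero_left of_real_0)
lemma scaleC_minus1: "scaleC (-1) (x::'a::complex_inner) = - x"
  by (metis scaleR_scaleC scaleR_minus1_left of_real_1 of_real_minus)
lemma scaleC_diff_right: "scaleC c (x - y::'a::complex_inner) = scaleC c x - scaleC c y"
  by (metis add_diff_cancel_right' diff_add_cancel scaleC_add_right)
lemma scaleC_diff_left: "scaleC (a - b) (x::'a::complex_inner) = scaleC a x - scaleC b x"
  by (metis add_diff_cancel_right' diff_add_cancel scaleC_add_left)

lemma cinner_zero_left [simp]: "cinner (0::'a::complex_inner) y = 0"
proof -
  have "cinner 0 y = cinner 0 y + cinner 0 y" using cinner_add_left[of 0 0 y] by simp
  then show ?thesis by simp
qed
lemma cinner_zero_right [simp]: "cinner (x::'a::complex_inner) 0 = 0"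
  using cinner_commute[of x 0] by simp
lemma cnj_cinner: "cnj (cinner x y) = cinner (y::'a::complex_inner) x"
  using cinner_commute[of y x] by simp
lemma cinner_add_right: "cinner (x::'a::complex_inner) (y + z) = cinner x y + cinner x z"
proof -
  have "cinner x (y+z) = cnj (cinner (y+z) x)" by (rule cinner_commute)
  also have "\<dots> = cnj (cinner y x) + cnj (cinner z x)" by (simp add: cinner_add_left)
  finally show ?thesis by (simp only: cnj_cinner)
qed
lemma cinner_scaleC_right: "cinner (x::'a::complex_inner) (scaleC a y) = cnj a * cinner x y"
proof -
  have "cinner x (scaleC a y) = cnj (cinner (scaleC a y) x)" by (rule cinner_commute)
  also have "\<dots> = cnj a * cnj (cinner y x)" by (simp add: cinner_scaleC_left)
  finally show ?thesis by (simp only: cnj_cinner)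
qed
lemma cinner_minus_left: "cinner (- x::'a::complex_inner) y = - cinner x y"
proof -
  have "0 = cinner (x + - x) y" by simp
  also have "\<dots> = cinner x y + cinner (-x) y" by (rule cinner_add_left)
  finally show ?thesis by (metis add.commute add_eq_0_iff)
qed
lemma cinner_minus_right: "cinner (x::'a::complex_inner) (- y) = - cinner x y"
proof -
  have "cinner x (- y) = cnj (cinner (- y) x)" by (rule cinner_commute)
  also have "\<dots> = - cnj (cinner y x)" by (simp add: cinner_minus_left)
  finally show ?thesis by (simp only: cnj_cinner)
qed
lemma cinner_diff_left: "cinner (x - y::'a::complex_inner) z = cinner x z - cinner y z"
  by (simp only: diff_conv_add_uminus cinner_add_left cinner_minus_left)
lemma cinner_diff_right: "cinner (x::'a::complex_inner) (y - z) = cinner x y - cinner x z"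
  by (simp only: diff_conv_add_uminus cinner_add_right cinner_minus_right)

lemma norm_sq_cinner: "(norm (x::'a::complex_inner))^2 = Re (cinner x x)"
proof -
  have "sqrt (Re (cinner x x)) \<ge> 0" using norm_ge_zero[of x] by (simp only: norm_eq_sqrt_cinner)
  then have "Re (cinner x x) \<ge> 0" by (simp add: real_sqrt_ge_0_iff)
  then show ?thesis by (simp add: norm_eq_sqrt_cinner)
qed

lemma cinner_self: "cinner (x::'a::complex_inner) x = complex_of_real ((norm x)^2)"
  by (simp add: complex_eq_iff norm_sq_cinner cinner_self_real)

lemma norm_scaleC: "norm (scaleC c (x::'a::complex_inner)) = cmod c * norm x"
proof -
  have "(norm (scaleC c x))^2 = Re (c * cnj c * cinner x x)"
    by (simp add: norm_sq_cinner cinner_scaleC_left cinner_scaleC_right mult.assoc cinner_self_real algebra_simps)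
  also have "\<dots> = (cmod c * norm x)^2"
    by (simp add: cinner_self complex_mult_cnj power_mult_distrib cmod_power2 flip: of_real_mult)
  finally show ?thesis
    by (metis norm_ge_zero power2_eq_imp_eq mult_nonneg_nonneg)
qed

lemma norm_add_sq: "(norm (x + y::'a::complex_inner))^2 = (norm x)^2 + (norm y)^2 + 2 * Re (cinner x y)"
proof -
  have "(norm (x+y))^2 = Re (cinner x x + cinner x y + (cinner y x + cinner y y))"
    by (simp add: norm_sq_cinner cinner_add_left cinner_add_right)
  also have "\<dots> = (norm x)^2 + (norm y)^2 + 2 * Re (cinner x y)"
    by (subst cinner_commute[of y x]) (simp add: norm_sq_cinner)
  finally show ?thesis .
qed

lemma norm_diff_sq: "(norm (x - y::'a::complex_inner))^2 = (norm x)^2 + (norm y)^2 - 2 * Re (cinner x y)"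
  using norm_add_sq[of x "-y"] by (simp add: cinner_minus_right)

lemma cauchy_schwarz: "cmod (cinner (x::'a::complex_inner) y) \<le> norm x * norm y"
proof (cases "y = 0")
  case True then show ?thesis by simp
next
  case False
  define N where "N = (norm y)^2"
  have N: "N > 0" using False by (simp add: N_def)
  define c where "c = cinner x y / complex_of_real N"
  have "0 \<le> (norm (x - scaleC c y))^2" by simp
  also have "\<dots> = (norm x)^2 + (cmod c * norm y)^2 - 2 * Re (cnj c * cinner x y)"
    by (simp add: norm_diff_sq norm_scaleC cinner_scaleC_right)
  also have "cnj c * cinner x y = complex_of_real ((cmod (cinner x y))^2 / N)"
  proof -
    have "cnj c * cinner x y = (cinner x y * cnj (cinner x y)) / complex_of_real N"
      by (simp add: c_def)
    also have "\<dots> = complex_of_real ((cmod (cinner x y))^2) / complex_of_real N"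
      by (simp only: complex_norm_square)
    finally show ?thesis by simp
  qed
  also have "(cmod c * norm y)^2 = (cmod (cinner x y))^2 / N"
  proof -
    have cN: "cmod (complex_of_real N) = N" using N by simp
    have "(cmod c * norm y)^2 = (cmod (cinner x y))^2 / N^2 * N"
      by (simp add: c_def norm_divide cN power_divide power_mult_distrib N_def[symmetric])
    also have "\<dots> = (cmod (cinner x y))^2 / N" using N by (simp add: power2_eq_square)
    finally show ?thesis .
  qed
  finally have "(cmod (cinner x y))^2 / N \<le> (norm x)^2" by simp
  then have "(cmod (cinner x y))^2 \<le> (norm x * norm y)^2"
    using N by (simp add: field_simps N_def power_mult_distrib)
  then show ?thesis
    by (rule power2_le_imp_le) simp
qed




lemma fu_seq:
  assumes "free_ultrafilter U"
  shows "U \<le> sequentially"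
proof (rule filter_leI)
  fix P assume "eventually P sequentially"
  then obtain N where N: "\<And>n. n \<ge> N \<Longrightarrow> P n" by (auto simp: eventually_sequentially)
  have "eventually (\<lambda>n. \<forall>m\<in>{..<N}. n \<noteq> m) U"
    using assms by (intro eventually_ball_finite) (auto simp: free_ultrafilter_def)
  then show "eventually P U"
  proof (rule eventually_mono)
    fix n assume "\<forall>m\<in>{..<N}. n \<noteq> m"
    then have "n \<ge> N" using not_le by fastforce
    then show "P n" by (rule N)
  qed
qed

lemma fu_nbot: "free_ultrafilter U \<Longrightarrow> U \<noteq> bot"
  by (simp add: free_ultrafilter_def)

lemma ultra_lim:
  fixes f :: "nat \<Rightarrow> 'b::heine_borel"
  assumes U: "free_ultrafilter U" and b: "bounded (range f)"
  shows "\<exists>L. (f \<longlongrightarrow> L) U"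
proof -
  have "compact (closure (range f))" using b by simp
  moreover have "filtermap f U \<noteq> bot" using U by (simp add: free_ultrafilter_def filtermap_bot_iff)
  moreover have "eventually (\<lambda>x. x \<in> closure (range f)) (filtermap f U)"
    by (simp add: eventually_filtermap closure_subset[THEN subsetD])
  ultimately obtain L where L: "inf (nhds L) (filtermap f U) \<noteq> bot"
    unfolding compact_filter by blast
  have "(f \<longlongrightarrow> L) U"
  proof (rule topological_tendstoI)
    fix S assume S: "open S" "L \<in> S"
    show "eventually (\<lambda>n. f n \<in> S) U"
    proof (rule ccontr)
      assume "\<not> eventually (\<lambda>n. f n \<in> S) U"
      then have "eventually (\<lambda>n. \<not> f n \<in> S) U" using U by (auto simp: free_ultrafilter_def)
      then have e1: "eventually (\<lambda>x. x \<notin> S) (filtermap f U)" by (simp add: eventually_filtermap)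
      have e2: "eventually (\<lambda>x. x \<in> S) (nhds L)" using S by (rule eventually_nhds_in_open)
      have "eventually (\<lambda>x. False) (inf (nhds L) (filtermap f U))"
        using eventually_inf[of "\<lambda>x. False" "nhds L" "filtermap f U"] e1 e2 by blast
      then show False using L by (simp add: eventually_False)
    qed
  qed
  then show ?thesis ..
qed

lemma lbounded_iff: "lbounded x \<longleftrightarrow> (\<exists>K. \<forall>n. norm (x n) \<le> K)"
  by (auto simp: lbounded_def bounded_iff)

lemma ueq_refl: "ueq U x x" by (simp add: ueq_def)

lemma ueq_sym: "ueq U x y \<Longrightarrow> ueq U y x"
  by (simp add: ueq_def norm_minus_commute)

lemma tendsto0_le:
  fixes f g :: "nat \<Rightarrow> real"
  assumes "(g \<longlongrightarrow> 0) U" "\<And>n. norm (f n) \<le> g n"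
  shows "(f \<longlongrightarrow> 0) U"
  by (rule Lim_null_comparison[OF _ assms(1)]) (use assms(2) in simp)

lemma ueq_trans: "ueq U x y \<Longrightarrow> ueq U y z \<Longrightarrow> ueq U x z"
  unfolding ueq_def
proof (rule tendsto0_le[OF tendsto_add_zero])
  fix n
  have "norm (x n - z n) \<le> norm (x n - y n) + norm (y n - z n)"
    using norm_triangle_ineq[of "x n - y n" "y n - z n"] by simp
  then show "norm (norm (x n - z n)) \<le> norm (x n - y n) + norm (y n - z n)" by simp
qed




lemma ubp:
  fixes p :: "nat \<Rightarrow> 'a::{real_normed_vector,complete_space} \<Rightarrow> real"
  assumes cont: "\<And>n. continuous_on UNIV (p n)"
  and sub: "\<And>n x y. p n (x + y) \<le> p n x + p n y"
  and hom: "\<And>n r x. p n (scaleR r x) = \<bar>r\<bar> * p n x"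
  and bnd: "\<And>x. \<exists>K. \<forall>n. p n x \<le> K"
  shows "\<exists>M. \<forall>n x. p n x \<le> M * norm x"
proof -
  have p0: "p n 0 = 0" for n using hom[of n 0 0] by simp
  have pm: "p n (- x) = p n x" for n x using hom[of n "-1" x] by simp
  have pnn: "p n x \<ge> 0" for n x
  proof -
    have "0 = p n (x + - x)" using p0 by simp
    also have "\<dots> \<le> p n x + p n (-x)" by (rule sub)
    finally show ?thesis using pm by simp
  qed
  define F where "F k = {x. \<forall>n. p n x \<le> real k}" for k :: nat
  have clF: "closed (F k)" for k
  proof -
    have "F k = (\<Inter>n. {x. p n x \<le> real k})" by (auto simp: F_def)
    moreover have "closed {x. p n x \<le> real k}" for n
      by (rule closed_Collect_le[OF cont continuous_on_const])
    ultimately show ?thesis by auto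
  qed
  have UF: "\<Union>(range F) = UNIV"
  proof -
    have "x \<in> F (nat \<lceil>K\<rceil>)" if "\<forall>n. p n x \<le> K" for x K
    proof -
      have "p n x \<le> real (nat \<lceil>K\<rceil>)" for n
        using that real_nat_ceiling_ge[of K] by (meson order.trans)
      then show ?thesis by (simp add: F_def)
    qed
    moreover have "x \<in> \<Union>(range F)" for x
    proof -
      obtain K where "\<forall>n. p n x \<le> K" using bnd by blast
      then show ?thesis using calculation by blast
    qed
    ultimately show ?thesis by blast
  qed
  have "\<exists>k. interior (F k) \<noteq> {}"
  proof (rule ccontr)
    assume "\<not> ?thesis"
    then have "euclidean interior_of \<Union>(range F) = {}"
      by (intro Baire_category_alt) (auto simp: completely_metrizable_space_euclidean clF closed_closedin[symmetric])
    then show False using UF by simp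
  qed
  then obtain k x0 where "x0 \<in> interior (F k)" by blast
  then obtain r where r: "r > 0" "ball x0 r \<subseteq> F k" by (auto simp: mem_interior)
  have x0: "x0 \<in> F k" using r by auto
  have small: "p n z \<le> 2 * real k" if "norm z < r" for n z
  proof -
    have "x0 + z \<in> ball x0 r" using that by (simp add: dist_norm)
    then have "p n (x0 + z) \<le> real k" using r unfolding F_def by auto
    moreover have "p n x0 \<le> real k" using x0 unfolding F_def by auto
    moreover have "p n z \<le> p n (x0 + z) + p n (- x0)"
      using sub[of n "x0 + z" "- x0"] by simp
    ultimately show ?thesis using pm by simp
  qed
  have "p n x \<le> (4 * real k / r) * norm x" for n x
  proof (cases "x = 0")
    case True then show ?thesis using p0 by simp
  next
    case False
    then have nx: "norm x > 0" by simp
    define z where "z = scaleR (r / (2 * norm x)) x"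
    have "norm z = r / 2" using nx r by (simp add: z_def)
    then have "p n z \<le> 2 * real k" using r by (intro small) simp
    moreover have "p n z = r / (2 * norm x) * p n x" using r nx by (simp add: z_def hom)
    ultimately have "r / (2 * norm x) * p n x \<le> 2 * real k" by simp
    then have "r * p n x \<le> 4 * real k * norm x" using nx by (simp add: field_simps)
    then have "p n x \<le> 4 * real k * norm x / r" using r by (simp add: pos_le_divide_eq mult.commute)
    then show ?thesis by simp
  qed
  then show ?thesis by blast
qed




lemma parallelogram: "(norm (a + b::'a::complex_inner))^2 + (norm (a - b))^2 = 2 * (norm a)^2 + 2 * (norm b)^2"
  by (simp add: norm_add_sq norm_diff_sq)

lemma scaleC_in_sub: "(\<And>c x. x \<in> K \<Longrightarrow> scaleC c x \<in> K) \<Longrightarrow> x \<in> K \<Longrightarrow> scaleR r (x::'a::complex_inner) \<in> K"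
  by (simp add: scaleR_scaleC)

lemma proj_exists:
  fixes K :: "'a::{complex_inner,complete_space} set"
  assumes clK: "closed K" and K0: "0 \<in> K" and Kadd: "\<And>x y. x\<in>K \<Longrightarrow> y\<in>K \<Longrightarrow> x + y \<in> K"
    and Ksc: "\<And>c x. x \<in> K \<Longrightarrow> scaleC c x \<in> K"
  shows "\<exists>p\<in>K. \<forall>k\<in>K. cinner (u - p) k = 0"
proof -
  define d where "d = infdist u K"
  have d0: "d \<ge> 0" by (simp add: d_def infdist_nonneg)
  have dle: "d \<le> norm (u - k)" if "k \<in> K" for k
    using infdist_le[OF that, of u] by (simp add: d_def dist_norm)
  define \<delta> where "\<delta> k = inverse (real (Suc k))" for k
  have \<delta>pos: "\<delta> k > 0" for k by (simp add: \<delta>_def)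
  have \<delta>mono: "\<delta> m \<le> \<delta> n" if "n \<le> m" for m n
    using that by (simp add: \<delta>_def)
  have "\<exists>q\<in>K. norm (u - q) < d + \<delta> k" for k
  proof (rule ccontr)
    assume "\<not> ?thesis"
    then have "\<forall>q\<in>K. d + \<delta> k \<le> dist u q" by (auto simp: dist_norm not_less)
    then have "d + \<delta> k \<le> (INF a\<in>K. dist u a)" using K0 by (intro cINF_greatest) auto
    moreover have "infdist u K = (INF a\<in>K. dist u a)" using K0 infdist_notempty by blast
    ultimately have "d + \<delta> k \<le> d" by (simp add: d_def)
    then show False using \<delta>pos[of k] by simp
  qed
  then obtain q where qK: "\<And>k. q k \<in> K" and qd: "\<And>k. norm (u - q k) < d + \<delta> k" by metis
  have key: "(norm (q m - q n))^2 \<le> 2 * (d + \<delta> m)^2 + 2 * (d + \<delta> n)^2 - 4 * d^2" for m n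
  proof -
    define mid where "mid = scaleR (1/2) (q m + q n)"
    have midK: "mid \<in> K" unfolding mid_def by (rule scaleC_in_sub[OF Ksc Kadd[OF qK qK]])
    have e1: "(u - q m) + (u - q n) = scaleR 2 (u - mid)"
      by (simp add: mid_def scaleR_right_diff_distrib scaleR_2 algebra_simps)
    have e2: "(u - q m) - (u - q n) = q n - q m" by simp
    have "2 * d \<le> 2 * norm (u - mid)" using dle[OF midK] by simp
    also have "\<dots> = norm ((u - q m) + (u - q n))" by (simp add: e1)
    finally have "(2 * d)^2 \<le> (norm ((u - q m) + (u - q n)))^2"
      using d0 by (intro power_mono) auto
    moreover have "(norm (u - q m))^2 \<le> (d + \<delta> m)^2"
      using qd[of m] by (intro power_mono) auto
    moreover have "(norm (u - q n))^2 \<le> (d + \<delta> n)^2"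
      using qd[of n] by (intro power_mono) auto
    moreover note parallelogram[of "u - q m" "u - q n"]
    ultimately show ?thesis by (simp add: e2 norm_minus_commute power_mult_distrib)
  qed
  have "Cauchy q"
  proof (rule metric_CauchyI)
    fix e :: real assume e: "e > 0"
    define t where "t = min 1 (e^2 / (4 * (2 * d + 1)))"
    have t: "t > 0" using e d0 by (simp add: t_def)
    obtain N where N: "inverse (real (Suc N)) < t" using reals_Archimedean[OF t] by blast
    have "dist (q m) (q n) < e" if "m \<ge> N" "n \<ge> N" for m n
    proof -
      have hm: "\<delta> m \<le> \<delta> N" "\<delta> n \<le> \<delta> N" using that \<delta>mono by auto
      have dN: "\<delta> N < t" using N by (simp add: \<delta>_def)
      have "(d + \<delta> m)^2 \<le> (d + \<delta> N)^2" using hm d0 \<delta>pos[of m] by (intro power_mono) auto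
      moreover have "(d + \<delta> n)^2 \<le> (d + \<delta> N)^2" using hm d0 \<delta>pos[of n] by (intro power_mono) auto
      ultimately have "(norm (q m - q n))^2 \<le> 4 * ((d + \<delta> N)^2 - d^2)" using key[of m n] by simp
      also have "\<dots> = 4 * \<delta> N * (2 * d + \<delta> N)" by (simp add: power2_eq_square algebra_simps)
      also have "\<dots> \<le> 4 * \<delta> N * (2 * d + 1)"
        using dN \<delta>pos[of N] by (intro mult_left_mono) (auto simp: t_def)
      also have "\<dots> < 4 * t * (2 * d + 1)"
        using dN d0 by (intro mult_strict_right_mono) auto
      also have "\<dots> \<le> e^2"
      proof -
        have "t \<le> e^2 / (4 * (2 * d + 1))" by (simp add: t_def)
        then show ?thesis using d0 by (simp add: field_simps)
      qed
      finally have "(norm (q m - q n))^2 < e^2" .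
      then show ?thesis using e by (simp add: dist_norm power_less_imp_less_base)
    qed
    then show "\<exists>M. \<forall>m\<ge>M. \<forall>n\<ge>M. dist (q m) (q n) < e" by blast
  qed
  then obtain p where qp: "q \<longlonglongrightarrow> p" using complete_UNIV convergent_def
    by (metis Cauchy_convergent_iff)
  have pK: "p \<in> K" using closed_sequentially[OF clK] qK qp by blast
  have "norm (u - p) \<le> d"
  proof (rule LIMSEQ_le[of "\<lambda>k. norm (u - q k)" _ "\<lambda>k. d + \<delta> k"])
    show "(\<lambda>k. norm (u - q k)) \<longlonglongrightarrow> norm (u - p)"
      by (intro tendsto_intros qp)
    show "(\<lambda>k. d + \<delta> k) \<longlonglongrightarrow> d"
      using tendsto_add[OF tendsto_const LIMSEQ_inverse_real_of_nat, of d] by (simp add: \<delta>_def)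
    show "\<exists>N. \<forall>n\<ge>N. norm (u - q n) \<le> d + \<delta> n" using qd less_imp_le by blast
  qed
  then have minim: "norm (u - p) \<le> norm (u - k)" if "k \<in> K" for k using dle[OF that] by simp
  define w where "w = u - p"
  have "cinner w k = 0" if kK: "k \<in> K" for k
  proof (cases "k = 0")
    case True then show ?thesis by simp
  next
    case False
    define N where "N = (norm k)^2"
    have N: "N > 0" using False by (simp add: N_def)
    define c where "c = cinner w k"
    define s where "s = scaleC (c / complex_of_real N) k"
    have sK: "s \<in> K" by (simp add: s_def Ksc kK)
    have "norm w \<le> norm (w - s)" using minim[OF Kadd[OF pK sK]] by (simp add: w_def algebra_simps)
    then have "(norm w)^2 \<le> (norm (w - s))^2" by (intro power_mono) auto
    also have "\<dots> = (norm w)^2 + (norm s)^2 - 2 * Re (cinner w s)" by (rule norm_diff_sq)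
    also have "(norm s)^2 = (cmod c)^2 / N"
    proof -
      have "norm s = cmod c / N * norm k" using N by (simp add: s_def norm_scaleC norm_divide)
      then show ?thesis using N by (simp add: N_def power2_eq_square field_simps)
    qed
    also have "Re (cinner w s) = (cmod c)^2 / N"
    proof -
      have "cinner w s = (cnj c * c) / complex_of_real N" by (simp add: s_def cinner_scaleC_right c_def)
      also have "\<dots> = complex_of_real ((cmod c)^2 / N)"
        using complex_norm_square[of c] by (simp add: mult.commute)
      finally show ?thesis by simp
    qed
    finally have "(cmod c)^2 / N \<le> 0" by simp
    then have "(cmod c)^2 \<le> 0" using N by (simp add: divide_le_0_iff)
    then show ?thesis by (simp add: c_def)
  qed
  then show ?thesis using pK unfolding w_def by blast
qed




lemma riesz:
  fixes f :: "'a::{complex_inner,complete_space} \<Rightarrow> complex"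
  assumes add: "\<And>x y. f (x + y) = f x + f y" and sc: "\<And>c x. f (scaleC c x) = c * f x"
    and bd: "\<And>x. cmod (f x) \<le> C * norm x"
  shows "\<exists>z. \<forall>x. f x = cinner x z"
proof -
  have bl: "bounded_linear f"
  proof (rule bounded_linear_intro[of _ C])
    show "f (x + y) = f x + f y" for x y by (rule add)
    show "f (scaleR r x) = scaleR r (f x)" for r x
      by (simp add: scaleR_scaleC sc scaleR_conv_of_real)
    show "norm (f x) \<le> norm x * C" for x using bd[of x] by (simp add: mult.commute)
  qed
  define K where "K = {x. f x = 0}"
  have clK: "closed K" unfolding K_def
    by (intro closed_Collect_eq continuous_on_const bounded_linear.continuous_on[OF bl] continuous_on_id)
  have f0: "f 0 = 0" using linear_0[OF bounded_linear.linear[OF bl]] .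
  have fdiff: "f (x - y) = f x - f y" for x y using linear_diff[OF bounded_linear.linear[OF bl]] .
  show ?thesis
  proof (cases "\<forall>x. f x = 0")
    case True then show ?thesis by (intro exI[of _ 0]) simp
  next
    case False
    then obtain u where u: "f u \<noteq> 0" by blast
    have "\<exists>p\<in>K. \<forall>k\<in>K. cinner (u - p) k = 0"
      by (rule proj_exists[OF clK]) (auto simp: K_def f0 add sc)
    then obtain p where pK: "p \<in> K" and orth: "\<And>k. k \<in> K \<Longrightarrow> cinner (u - p) k = 0" by blast
    define w where "w = u - p"
    have fw: "f w = f u" using pK by (simp add: w_def fdiff K_def)
    then have "w \<noteq> 0" using u f0 by auto
    define N where "N = (norm w)^2"
    have N: "N > 0" using \<open>w \<noteq> 0\<close> by (simp add: N_def)
    define z where "z = scaleC (cnj (f w) / complex_of_real N) w"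
    have "f x = cinner x z" for x
    proof -
      define v where "v = x - scaleC (f x / f w) w"
      have "f v = 0" using fw u by (simp add: v_def fdiff sc)
      then have "cinner w v = 0" using orth by (simp add: K_def w_def)
      then have "cinner v w = 0" using cinner_commute[of v w] by simp
      then have "cinner x w = (f x / f w) * complex_of_real N"
        by (simp add: v_def cinner_diff_left cinner_scaleC_left cinner_self N_def)
      then show ?thesis using fw u N
        by (simp add: z_def cinner_scaleC_right)
    qed
    then show ?thesis by blast
  qed
qed

lemma cblinear_bl: "cblinear T \<Longrightarrow> bounded_linear T" by (simp add: cblinear_def)

lemma adjoint_prop:
  fixes T :: "'a::{complex_inner,complete_space} \<Rightarrow> 'a"
  assumes "cblinear T"
  shows "cinner (T x) y = cinner x (cadjoint T y)"
proof -
  have bl: "bounded_linear T" using assms by (simp add: cblinear_def)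
  have scT: "T (scaleC c x) = scaleC c (T x)" for c x using assms by (simp add: cblinear_def)
  obtain K where K: "\<And>x. norm (T x) \<le> norm x * K" using bounded_linear.bounded[OF bl] by blast
  have ex: "\<exists>z. \<forall>x. cinner (T x) y = cinner x z" for y
  proof (rule riesz)
    show "cinner (T (x1 + x2)) y = cinner (T x1) y + cinner (T x2) y" for x1 x2
      by (simp add: linear_add[OF bounded_linear.linear[OF bl]] cinner_add_left)
    show "cinner (T (scaleC c x)) y = c * cinner (T x) y" for c x
      by (simp add: scT cinner_scaleC_left)
    show "cmod (cinner (T x) y) \<le> (K * norm y) * norm x" for x
    proof -
      have "cmod (cinner (T x) y) \<le> norm (T x) * norm y" by (rule cauchy_schwarz)
      also have "\<dots> \<le> (norm x * K) * norm y" by (intro mult_right_mono K) simp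
      finally show ?thesis by (simp add: mult_ac)
    qed
  qed
  define A where "A y = (SOME z. \<forall>x. cinner (T x) y = cinner x z)" for y
  have A1: "\<forall>x. cinner (T x) y = cinner x (A y)" for y
    unfolding A_def by (rule someI_ex[OF ex])
  have A: "\<forall>x y. cinner (T x) y = cinner x (A y)" using A1 by blast
  have uniq: "B = A" if "\<forall>x y. cinner (T x) y = cinner x (B y)" for B
  proof
    fix y
    have "cinner x (B y - A y) = 0" for x using that A by (simp add: cinner_diff_right)
    then have "cinner (B y - A y) (B y - A y) = 0" by blast
    then show "B y = A y" by (simp add: cinner_self)
  qed
  have "\<forall>x y. cinner (T x) y = cinner x (cadjoint T y)"
    unfolding cadjoint_def
    by (rule theI[of _ A], rule A, erule uniq)
  then show ?thesis by blast
qed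




definition Sd :: "nat filter \<Rightarrow> (nat \<Rightarrow> 'a::complex_inner) set" where
  "Sd U = {s. lbounded s \<and> (\<exists>y. ueq U s (\<lambda>n. y))}"

definition Wd :: "'a \<Rightarrow> (nat \<Rightarrow> 'a)" where "Wd x = (\<lambda>n. x)"

lemma lbounded_const: "lbounded (\<lambda>n. y)" by (auto simp: lbounded_iff)

lemma Wd_in: "Wd x \<in> Sd U"
  by (auto simp: Sd_def Wd_def lbounded_const intro: ueq_refl)

lemma ueq_const: "ueq U s (\<lambda>n. y) \<longleftrightarrow> ((\<lambda>n. norm (s n - y)) \<longlongrightarrow> 0) U"
  by (simp add: ueq_def)

lemma null_cmp:
  fixes f :: "nat \<Rightarrow> 'b::real_normed_vector"
  assumes "\<And>n. norm (f n) \<le> g n" "(g \<longlongrightarrow> 0) U"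
  shows "(f \<longlongrightarrow> 0) U"
  by (rule Lim_null_comparison[OF always_eventually assms(2)]) (use assms(1) in blast)

lemma seq_to_U: "free_ultrafilter U \<Longrightarrow> (f \<longlongrightarrow> l) sequentially \<Longrightarrow> (f \<longlongrightarrow> l) U"
  using tendsto_mono fu_seq by blast

lemma closed_Sd:
  fixes U :: "nat filter"
  assumes U: "free_ultrafilter U"
  shows "closed_usubspace U (Sd U :: (nat \<Rightarrow> 'a::{complex_inner,complete_space}) set)"
  unfolding closed_usubspace_def
proof (intro conjI ballI allI impI)
  show "lbounded s" if "s \<in> Sd U" for s using that by (simp add: Sd_def)
  show "(\<lambda>n. 0) \<in> Sd U" using Wd_in[of 0 U] by (simp add: Wd_def)
  show "(\<lambda>n. s n + t n) \<in> Sd U" if "s \<in> Sd U" "t \<in> Sd U" for s t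
  proof -
    obtain y K where y: "ueq U s (\<lambda>n. y)" and K: "\<And>n. norm (s n) \<le> K"
      using \<open>s \<in> Sd U\<close> by (auto simp: Sd_def lbounded_iff)
    obtain z L where z: "ueq U t (\<lambda>n. z)" and L: "\<And>n. norm (t n) \<le> L"
      using \<open>t \<in> Sd U\<close> by (auto simp: Sd_def lbounded_iff)
    have "lbounded (\<lambda>n. s n + t n)" unfolding lbounded_iff
      by (rule exI[of _ "K + L"]) (meson K L add_mono norm_triangle_ineq order.trans)
    moreover have "ueq U (\<lambda>n. s n + t n) (\<lambda>n. y + z)"
      unfolding ueq_const
    proof (rule null_cmp)
      show "norm (norm (s n + t n - (y + z))) \<le> norm (s n - y) + norm (t n - z)" for n
        using norm_triangle_ineq[of "s n - y" "t n - z"] by (simp add: algebra_simps)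
      show "((\<lambda>n. norm (s n - y) + norm (t n - z)) \<longlongrightarrow> 0) U"
        using tendsto_add_zero y z by (auto simp: ueq_const)
    qed
    ultimately show ?thesis by (auto simp: Sd_def)
  qed
  show "(\<lambda>n. scaleC c (s n)) \<in> Sd U" if "s \<in> Sd U" for s c
  proof -
    obtain y K where y: "ueq U s (\<lambda>n. y)" and K: "\<And>n. norm (s n) \<le> K"
      using \<open>s \<in> Sd U\<close> by (auto simp: Sd_def lbounded_iff)
    have "lbounded (\<lambda>n. scaleC c (s n))" unfolding lbounded_iff
      by (rule exI[of _ "cmod c * K"]) (simp add: norm_scaleC K mult_left_mono)
    moreover have "ueq U (\<lambda>n. scaleC c (s n)) (\<lambda>n. scaleC c y)"
      unfolding ueq_const
    proof (rule null_cmp)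
      show "norm (norm (scaleC c (s n) - scaleC c y)) \<le> cmod c * norm (s n - y)" for n
        by (simp add: norm_scaleC flip: scaleC_diff_right)
      show "((\<lambda>n. cmod c * norm (s n - y)) \<longlongrightarrow> 0) U"
        using tendsto_mult_right_zero y by (auto simp: ueq_const)
    qed
    ultimately show ?thesis by (auto simp: Sd_def)
  qed
  show "t \<in> Sd U" if "s \<in> Sd U" "lbounded t \<and> ueq U s t" for s t
    using that unfolding Sd_def by (blast intro: ueq_trans ueq_sym)
  show "x \<in> Sd U" if x: "lbounded x \<and> (\<forall>e>0. \<exists>s\<in>Sd U. unorm U (\<lambda>n. x n - s n) < e)" for x :: "nat \<Rightarrow> 'a"
  proof -
    have Unb: "U \<noteq> bot" using U by (rule fu_nbot)
    obtain Kx where Kx: "\<And>n. norm (x n) \<le> Kx" using x by (auto simp: lbounded_iff)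
    have approx: "\<exists>y. eventually (\<lambda>n. norm (x n - y) < e) U" if e: "e > 0" for e
    proof -
      obtain s where sS: "s \<in> Sd U" and su: "unorm U (\<lambda>n. x n - s n) < e" using x e by blast
      obtain y Ks where y: "ueq U s (\<lambda>n. y)" and Ks: "\<And>n. norm (s n) \<le> Ks"
        using sS by (auto simp: Sd_def lbounded_iff)
      have "bounded (range (\<lambda>n. norm (x n - s n)))"
      proof -
        have "norm (norm (x n - s n)) \<le> Kx + Ks" for n
          using norm_triangle_ineq4[of "x n" "s n"] Kx[of n] Ks[of n] by simp
        then show ?thesis by (auto simp: bounded_iff)
      qed
      then obtain L where L: "((\<lambda>n. norm (x n - s n)) \<longlongrightarrow> L) U" using ultra_lim[OF U] by blast
      have "unorm U (\<lambda>n. x n - s n) = L" unfolding unorm_def using Unb L by (simp add: tendsto_Lim)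
      then have Le: "L < e" using su by simp
      have ev1: "eventually (\<lambda>n. norm (x n - s n) < L + (e - L) / 2) U"
        using order_tendstoD(2)[OF L] Le by simp
      have ev2: "eventually (\<lambda>n. norm (s n - y) < (e - L) / 2) U"
        using order_tendstoD(2)[OF y[unfolded ueq_const], of "(e - L) / 2"] Le by simp
      have "eventually (\<lambda>n. norm (x n - y) < e) U"
      proof (rule eventually_mono[OF eventually_conj[OF ev1 ev2]])
        fix n assume "norm (x n - s n) < L + (e - L) / 2 \<and> norm (s n - y) < (e - L) / 2"
        moreover have "norm (x n - y) \<le> norm (x n - s n) + norm (s n - y)"
          using norm_triangle_ineq[of "x n - s n" "s n - y"] by simp
        ultimately show "norm (x n - y) < e" by (smt (verit, best) field_sum_of_halves)
      qed
      then show ?thesis by blast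
    qed
    define \<delta> where "\<delta> k = inverse (real (Suc k))" for k
    have \<delta>pos: "\<delta> k > 0" for k by (simp add: \<delta>_def)
    have \<delta>mono: "\<delta> m \<le> \<delta> n" if "n \<le> m" for m n using that by (simp add: \<delta>_def)
    have "\<exists>y. eventually (\<lambda>n. norm (x n - y) < \<delta> k) U" for k using approx \<delta>pos by blast
    then obtain y where y: "\<And>k. eventually (\<lambda>n. norm (x n - y k) < \<delta> k) U" by metis
    have ydist: "norm (y m - y k) < \<delta> m + \<delta> k" for m k
    proof -
      obtain i where i: "norm (x i - y m) < \<delta> m" "norm (x i - y k) < \<delta> k"
        using eventually_happens'[OF Unb eventually_conj[OF y[of m] y[of k]]] by blast
      have "norm (y m - y k) \<le> norm (x i - y m) + norm (x i - y k)"
        using norm_triangle_ineq4[of "x i - y k" "x i - y m"] by (simp add: algebra_simps)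
      then show ?thesis using i by simp
    qed
    have "Cauchy y"
    proof (rule metric_CauchyI)
      fix e :: real assume e: "e > 0"
      obtain N where N: "inverse (real (Suc N)) < e / 2" using reals_Archimedean[of "e/2"] e by auto
      have "dist (y m) (y n) < e" if "m \<ge> N" "n \<ge> N" for m n
      proof -
        have "\<delta> m \<le> \<delta> N" "\<delta> n \<le> \<delta> N" using that \<delta>mono by auto
        moreover have "\<delta> N < e / 2" using N by (simp add: \<delta>_def)
        ultimately show ?thesis using ydist[of m n] unfolding dist_norm by linarith
      qed
      then show "\<exists>M. \<forall>m\<ge>M. \<forall>n\<ge>M. dist (y m) (y n) < e" by blast
    qed
    then have "convergent y" by (rule Cauchy_convergent)
    then obtain c where yc: "y \<longlonglongrightarrow> c" unfolding convergent_def by blast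
    have "((\<lambda>n. norm (x n - c)) \<longlongrightarrow> 0) U"
    proof (rule tendstoI)
      fix e :: real assume e: "e > 0"
      have "eventually (\<lambda>k. dist (y k) c < e / 2) sequentially" using tendstoD[OF yc, of "e/2"] e by simp
      moreover have "eventually (\<lambda>k. \<delta> k < e / 2) sequentially"
        using order_tendstoD(2)[OF LIMSEQ_inverse_real_of_nat, of "e/2"] e by (simp add: \<delta>_def)
      ultimately obtain k where k: "dist (y k) c < e / 2" "\<delta> k < e / 2"
        using eventually_happens'[OF trivial_limit_sequentially eventually_conj] by blast
      show "eventually (\<lambda>n. dist (norm (x n - c)) 0 < e) U"
      proof (rule eventually_mono[OF y[of k]])
        fix n assume "norm (x n - y k) < \<delta> k"
        moreover have "norm (x n - c) \<le> norm (x n - y k) + norm (y k - c)"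
          using norm_triangle_ineq[of "x n - y k" "y k - c"] by simp
        ultimately show "dist (norm (x n - c)) 0 < e" using k by (simp add: dist_norm)
      qed
    qed
    then show ?thesis using x by (auto simp: Sd_def ueq_const)
  qed
qed

lemma unitary_Wd:
  assumes U: "free_ultrafilter U"
  shows "unitary_onto U (Sd U) (Wd :: 'a::complex_inner \<Rightarrow> _)"
  unfolding unitary_onto_def
proof (intro conjI allI ballI)
  show "Wd x \<in> Sd U" for x by (rule Wd_in)
  show "ueq U (Wd (x + y)) (\<lambda>n. Wd x n + Wd y n)" for x y by (simp add: Wd_def ueq_refl)
  show "ueq U (Wd (scaleC c x)) (\<lambda>n. scaleC c (Wd x n))" for c x by (simp add: Wd_def ueq_refl)
  show "uinner U (Wd x) (Wd y) = cinner x y" for x y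
    unfolding uinner_def Wd_def using fu_nbot[OF U] by (simp add: tendsto_Lim)
  show "\<exists>x. ueq U (Wd x) s" if "s \<in> Sd U" for s
    using that by (auto simp: Sd_def Wd_def intro: ueq_sym)
qed




lemma unif_bound:
  fixes T :: "nat \<Rightarrow> 'a::{complex_inner,complete_space} \<Rightarrow> 'a"
  assumes bl: "\<And>n. bounded_linear (T n)" and pb: "\<And>x. \<exists>K. \<forall>n. norm (T n x) \<le> K"
  shows "\<exists>M\<ge>0. \<forall>n x. norm (T n x) \<le> M * norm x"
proof -
  have "\<exists>M. \<forall>n x. norm (T n x) \<le> M * norm x"
  proof (rule ubp)
    show "continuous_on UNIV (\<lambda>x. norm (T n x))" for n
      by (intro continuous_on_norm bounded_linear.continuous_on[OF bl] continuous_on_id)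
    show "norm (T n (x + y)) \<le> norm (T n x) + norm (T n y)" for n x y
      by (simp add: linear_add[OF bounded_linear.linear[OF bl]] norm_triangle_ineq)
    show "norm (T n (scaleR r x)) = \<bar>r\<bar> * norm (T n x)" for n r x
      by (simp add: linear_scale[OF bounded_linear.linear[OF bl]])
    show "\<exists>K. \<forall>n. norm (T n x) \<le> K" for x by (rule pb)
  qed
  then obtain M where M: "\<And>n x. norm (T n x) \<le> M * norm x" by blast
  have "norm (T n x) \<le> max M 0 * norm x" for n x
  proof -
    have "M * norm x \<le> max M 0 * norm x" by (intro mult_right_mono) auto
    then show ?thesis using M[of n x] by linarith
  qed
  then show ?thesis by (intro exI[of _ "max M 0"]) auto
qed

lemma bl_cinner: "bounded_linear (\<lambda>y. cinner (a::'a::complex_inner) y)"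
proof (rule bounded_linear_intro[of _ "norm a"])
  show "cinner a (x + y) = cinner a x + cinner a y" for x y by (rule cinner_add_right)
  show "cinner a (scaleR r x) = scaleR r (cinner a x)" for r x
    by (simp add: scaleR_scaleC cinner_scaleC_right scaleR_conv_of_real)
  show "norm (cinner a x) \<le> norm x * norm a" for x
    using cauchy_schwarz[of a x] by (simp add: mult.commute)
qed

lemma vec_bound:
  fixes a :: "nat \<Rightarrow> 'a::{complex_inner,complete_space}"
  assumes pb: "\<And>y. \<exists>K. \<forall>n. cmod (cinner (a n) y) \<le> K"
  shows "\<exists>M. \<forall>n. norm (a n) \<le> M"
proof -
  have "\<exists>M. \<forall>n y. cmod (cinner (a n) y) \<le> M * norm y"
  proof (rule ubp)
    show "continuous_on UNIV (\<lambda>y. cmod (cinner (a n) y))" for n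
      by (intro continuous_on_norm bounded_linear.continuous_on[OF bl_cinner] continuous_on_id)
    show "cmod (cinner (a n) (x + y)) \<le> cmod (cinner (a n) x) + cmod (cinner (a n) y)" for n x y
      by (simp add: cinner_add_right norm_triangle_ineq)
    show "cmod (cinner (a n) (scaleR r x)) = \<bar>r\<bar> * cmod (cinner (a n) x)" for n r x
      by (simp add: linear_scale[OF bounded_linear.linear[OF bl_cinner]])
    show "\<exists>K. \<forall>n. cmod (cinner (a n) y) \<le> K" for y by (rule pb)
  qed
  then obtain M where M: "\<And>n y. cmod (cinner (a n) y) \<le> M * norm y" by blast
  have "norm (a n) \<le> max M 0" for n
  proof (cases "a n = 0")
    case True then show ?thesis by simp
  next
    case False
    then have pos: "norm (a n) > 0" by simp
    have "norm (a n) * norm (a n) \<le> M * norm (a n)"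
      using M[of n "a n"] by (simp add: cinner_self power2_eq_square norm_mult)
    then have "norm (a n) \<le> M" using pos by simp
    then show ?thesis by simp
  qed
  then show ?thesis by blast
qed

lemma conv_bound: "(f \<longlonglongrightarrow> (l::'b::real_normed_vector)) \<Longrightarrow> \<exists>K. \<forall>n. norm (f n) \<le> K"
  using convergent_imp_Bseq[of f] unfolding Bseq_def convergent_def by blast

lemma norm_to0: "(f \<longlongrightarrow> (l::'b::real_normed_vector)) F \<Longrightarrow> ((\<lambda>n. norm (f n - l)) \<longlongrightarrow> 0) F"
  using tendsto_norm_zero[OF LIM_zero] by blast

lemma inv_Sd:
  fixes T :: "nat \<Rightarrow> 'a::{complex_inner,complete_space} \<Rightarrow> 'a"
  assumes U: "free_ultrafilter U" and bl: "\<And>n. bounded_linear (T n)"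
    and M: "\<And>n x. norm (T n x) \<le> M * norm x" "M \<ge> 0" and sot: "sot_conv T B"
  shows "uinvariant U T (Sd U)"
  unfolding uinvariant_def
proof
  fix s :: "nat \<Rightarrow> 'a" assume "s \<in> Sd U"
  then obtain y Ks where y: "ueq U s (\<lambda>n. y)" and Ks: "\<And>n. norm (s n) \<le> Ks"
    by (auto simp: Sd_def lbounded_iff)
  have "lbounded (uop T s)" unfolding lbounded_iff uop_def
  proof (rule exI[of _ "M * Ks"], rule allI)
    fix n
    have "M * norm (s n) \<le> M * Ks" using Ks[of n] M(2) by (rule mult_left_mono)
    then show "norm (T n (s n)) \<le> M * Ks" using M(1)[of n "s n"] by linarith
  qed
  moreover have "ueq U (uop T s) (\<lambda>n. B y)"
    unfolding ueq_const uop_def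
  proof (rule null_cmp)
    show "norm (norm (T n (s n) - B y)) \<le> M * norm (s n - y) + norm (T n y - B y)" for n
    proof -
      have "T n (s n) - B y = T n (s n - y) + (T n y - B y)"
        by (simp add: linear_diff[OF bounded_linear.linear[OF bl]])
      then have "norm (T n (s n) - B y) \<le> norm (T n (s n - y)) + norm (T n y - B y)"
        by (simp only: norm_triangle_ineq)
      then show ?thesis using M(1)[of n "s n - y"] by simp
    qed
    show "((\<lambda>n. M * norm (s n - y) + norm (T n y - B y)) \<longlongrightarrow> 0) U"
    proof (rule tendsto_add_zero)
      show "((\<lambda>n. M * norm (s n - y)) \<longlongrightarrow> 0) U"
        using tendsto_mult_right_zero y by (auto simp: ueq_const)
      show "((\<lambda>n. norm (T n y - B y)) \<longlongrightarrow> 0) U"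
        using sot U by (intro seq_to_U[OF U] norm_to0) (auto simp: sot_conv_def)
    qed
  qed
  ultimately show "uop T s \<in> Sd U" by (auto simp: Sd_def)
qed

lemma restr_eq:
  assumes U: "free_ultrafilter U" and sot: "sot_conv T B"
  shows "ueq U (uop T (Wd x)) (Wd (B x))"
  unfolding ueq_def uop_def Wd_def
  using sot U by (intro seq_to_U[OF U] norm_to0) (auto simp: sot_conv_def)

lemma part1:
  fixes T :: "nat \<Rightarrow> 'a::{complex_inner,complete_space} \<Rightarrow> 'a"
  assumes U: "free_ultrafilter U" and T: "\<And>n. cblinear (T n)" and sot: "sot_conv T B"
  shows "ue_restriction U T B"
proof -
  have bl: "\<And>n. bounded_linear (T n)" using T by (simp add: cblinear_def)
  obtain M where M: "M \<ge> 0" "\<And>n x. norm (T n x) \<le> M * norm x"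
  proof -
    have "\<exists>K. \<forall>n. norm (T n x) \<le> K" for x
      using sot conv_bound unfolding sot_conv_def by blast
    from unif_bound[of T, OF bl this] show ?thesis using that by blast
  qed
  show ?thesis unfolding ue_restriction_def
    using closed_Sd[OF U] inv_Sd[OF U bl M(2) M(1) sot] unitary_Wd[OF U] restr_eq[OF U sot]
    by blast
qed




lemma part2:
  fixes T :: "nat \<Rightarrow> 'a::{complex_inner,complete_space} \<Rightarrow> 'a"
  assumes U: "free_ultrafilter U" and wot: "wot_conv T B"
  shows "ue_compression U T B"
proof -
  have proj: "uproj U (Sd U) (uop T (Wd x)) (Wd (B x))" for x
    unfolding uproj_def
  proof (intro conjI ballI)
    show "Wd (B x) \<in> Sd U" by (rule Wd_in)
    fix s :: "nat \<Rightarrow> 'a" assume "s \<in> Sd U"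
    then obtain y where y: "ueq U s (\<lambda>n. y)" by (auto simp: Sd_def)
    have "\<exists>K. \<forall>n. cmod (cinner (T n x) z) \<le> K" for z
      using wot conv_bound unfolding wot_conv_def by blast
    then obtain A where A: "\<And>n. norm (T n x) \<le> A" using vec_bound[of "\<lambda>n. T n x"] by blast
    define f where "f n = cinner (T n x - B x) (s n)" for n
    have fsplit: "f n = (cinner (T n x) y - cinner (B x) y) + cinner (T n x - B x) (s n - y)" for n
      by (simp add: f_def cinner_diff_left cinner_diff_right)
    have "(f \<longlongrightarrow> 0) U"
      unfolding fsplit
    proof (rule tendsto_add_zero)
      show "((\<lambda>n. cinner (T n x) y - cinner (B x) y) \<longlongrightarrow> 0) U"
        using wot by (intro seq_to_U[OF U] LIM_zero) (auto simp: wot_conv_def)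
      show "((\<lambda>n. cinner (T n x - B x) (s n - y)) \<longlongrightarrow> 0) U"
      proof (rule null_cmp)
        show "norm (cinner (T n x - B x) (s n - y)) \<le> (A + norm (B x)) * norm (s n - y)" for n
        proof -
          have "norm (cinner (T n x - B x) (s n - y)) \<le> norm (T n x - B x) * norm (s n - y)"
            by (rule cauchy_schwarz)
          also have "\<dots> \<le> (A + norm (B x)) * norm (s n - y)"
          proof (rule mult_right_mono)
            show "norm (T n x - B x) \<le> A + norm (B x)"
              using norm_triangle_ineq4[of "T n x" "B x"] A[of n] by linarith
          qed simp
          finally show ?thesis .
        qed
        show "((\<lambda>n. (A + norm (B x)) * norm (s n - y)) \<longlongrightarrow> 0) U"
          using tendsto_mult_right_zero y by (auto simp: ueq_const)
      qed
    qed
    then have "Lim U f = 0" using fu_nbot[OF U] by (simp add: tendsto_Lim)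
    then show "uinner U (\<lambda>n. uop T (Wd x) n - Wd (B x) n) s = 0"
      by (simp add: uinner_def uop_def Wd_def f_def[abs_def])
  qed
  show ?thesis unfolding ue_compression_def
    using closed_Sd[OF U] unitary_Wd[OF U] proj by blast
qed

lemma adj_Sd:
  fixes T :: "nat \<Rightarrow> 'a::{complex_inner,complete_space} \<Rightarrow> 'a"
  assumes U: "free_ultrafilter U" and T: "\<And>n. cblinear (T n)" and Bc: "cblinear B"
    and M: "\<And>n x. norm (T n x) \<le> M * norm x" "M \<ge> 0"
    and ssot: "star_sot_conv T B"
  shows "uinvariant_adj U T (Sd U)"
  unfolding uinvariant_adj_def
proof
  fix s :: "nat \<Rightarrow> 'a" assume "s \<in> Sd U"
  then obtain y where y: "ueq U s (\<lambda>n. y)" by (auto simp: Sd_def)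
  define z where "z = cadjoint B y"
  have "uinner U (uop T v) s = uinner U v (Wd z)" if v: "lbounded v" for v
  proof -
    obtain V where V: "\<And>n. norm (v n) \<le> V" using v by (auto simp: lbounded_iff)
    define f where "f n = cinner (T n (v n)) (s n)" for n
    define g where "g n = cinner (v n) z" for n
    have "bounded (range g)"
    proof -
      have "norm (g n) \<le> V * norm z" for n
        unfolding g_def using cauchy_schwarz[of "v n" z] V[of n]
        by (meson mult_right_mono norm_ge_zero order.trans)
      then show ?thesis by (auto simp: bounded_iff)
    qed
    then obtain L where gL: "(g \<longlongrightarrow> L) U" using ultra_lim[OF U] by blast
    have fsplit: "f n - g n = cinner (T n (v n)) (s n - y) + cinner (v n) (cadjoint (T n) y - z)" for n
      by (simp add: f_def g_def cinner_diff_right adjoint_prop[OF T])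
    have "((\<lambda>n. f n - g n) \<longlongrightarrow> 0) U"
      unfolding fsplit
    proof (rule tendsto_add_zero)
      show "((\<lambda>n. cinner (T n (v n)) (s n - y)) \<longlongrightarrow> 0) U"
      proof (rule null_cmp)
        show "norm (cinner (T n (v n)) (s n - y)) \<le> (M * V) * norm (s n - y)" for n
        proof -
          have "norm (cinner (T n (v n)) (s n - y)) \<le> norm (T n (v n)) * norm (s n - y)"
            by (rule cauchy_schwarz)
          also have "\<dots> \<le> (M * V) * norm (s n - y)"
          proof (rule mult_right_mono)
            have "M * norm (v n) \<le> M * V" using V[of n] M(2) by (rule mult_left_mono)
            then show "norm (T n (v n)) \<le> M * V" using M(1)[of n "v n"] by linarith
          qed simp
          finally show ?thesis .
        qed
        show "((\<lambda>n. (M * V) * norm (s n - y)) \<longlongrightarrow> 0) U"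
          using tendsto_mult_right_zero y by (auto simp: ueq_const)
      qed
      show "((\<lambda>n. cinner (v n) (cadjoint (T n) y - z)) \<longlongrightarrow> 0) U"
      proof (rule null_cmp)
        show "norm (cinner (v n) (cadjoint (T n) y - z)) \<le> V * norm (cadjoint (T n) y - z)" for n
          using cauchy_schwarz[of "v n" "cadjoint (T n) y - z"] V[of n]
          by (meson mult_right_mono norm_ge_zero order.trans)
        show "((\<lambda>n. V * norm (cadjoint (T n) y - z)) \<longlongrightarrow> 0) U"
          using ssot unfolding star_sot_conv_def sot_conv_def z_def
          by (intro tendsto_mult_right_zero seq_to_U[OF U] norm_to0) auto
      qed
    qed
    then have "(f \<longlongrightarrow> L) U" using tendsto_add[OF gL] by fastforce
    then have "Lim U f = L" "Lim U g = L" using fu_nbot[OF U] gL by (auto simp: tendsto_Lim)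
    then show ?thesis by (simp add: uinner_def uop_def Wd_def f_def[abs_def] g_def[abs_def])
  qed
  then show "\<exists>t\<in>Sd U. \<forall>v. lbounded v \<longrightarrow> uinner U (uop T v) s = uinner U v t"
    using Wd_in by blast
qed



theorem lemma3p8:
  fixes U :: "nat filter"
    and T :: "nat \<Rightarrow> 'a::{complex_inner, complete_space} \<Rightarrow> 'a"
    and B :: "'a \<Rightarrow> 'a"
  assumes "separable_type TYPE('a)"
    and "infinite_dimensional TYPE('a)"
    and "free_ultrafilter U"
    and "\<And>n. cblinear (T n)"
    and "cblinear B"
  shows "(sot_conv T B \<longrightarrow> ue_restriction U T B)
    \<and> (wot_conv T B \<longrightarrow> ue_compression U T B)
    \<and> (star_sot_conv T B \<longrightarrow> ue_reducing_part U T B)"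
proof (intro conjI impI)
  have U: "free_ultrafilter U" by fact
  have Tc: "\<And>n. cblinear (T n)" by fact
  have bl: "\<And>n. bounded_linear (T n)" using Tc by (simp add: cblinear_def)
  show "ue_restriction U T B" if "sot_conv T B" by (rule part1[OF U Tc that])
  show "ue_compression U T B" if "wot_conv T B" by (rule part2[OF U that])
  show "ue_reducing_part U T B" if star: "star_sot_conv T B"
  proof -
    have sot: "sot_conv T B" using star by (simp add: star_sot_conv_def)
    obtain M where M: "M \<ge> 0" "\<And>n x. norm (T n x) \<le> M * norm x"
    proof -
      have "\<exists>K. \<forall>n. norm (T n x) \<le> K" for x
        using sot conv_bound unfolding sot_conv_def by blast
      from unif_bound[of T, OF bl this] show ?thesis using that by blast
    qed
    show ?thesis unfolding ue_reducing_part_def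
      using closed_Sd[OF U] inv_Sd[OF U bl M(2) M(1) sot] adj_Sd[OF U Tc assms(5) M(2) M(1) star]
        unitary_Wd[OF U] restr_eq[OF U sot]
      by blast
  qed
qed

end
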